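(* Let $G$ be a compact connected Lie group of dimension $m\ge2$, with the notation of the context. Let $A\in\mathrm{GL}(m,\mathbb R)$, let $P\in\mathrm O(m)$ sort $A$, and let $1\le k\le m$. Then \[ \frac{\operatorname{diam}(G,g_I|^*_{\mathcal C_{P,k}})}{\sigma_k(A)}\le\operatorname{diam}(G,g_A)\le\frac{\operatorname{diam}(G,\mathcal H_{P,k},g_I|_{\mathcal H_{P,k}})}{\sigma_k(A)} . \]
   Context: Let $\mathfrak g$ be the Lie algebra of $G$; fix an $\operatorname{Ad}(G)$-invariant inner product $g_I$ on $\mathfrak g$ and a $g_I$-orthonormal basis $\{X_1,\dots,X_m\}$. For $A=(a_{ij})\in\mathrm{GL}(m,\mathbb R)$ put $X_j(A)=\sum_i a_{ij}X_i$, and let $g_A$ be the inner product on $\mathfrak g$ (equivalently left-invariant Riemannian metric on $G$) with orthonormal basis $\{X_1(A),\dots,X_m(A)\}$. Let $\sigma_1(A)\ge\dots\ge\sigma_m(A)>0$ with $\sigma_j(A)^2$ the eigenvalues of $AA^t$. $P\in\mathrm O(m)$ sorts $A$ if $AA^t=P\,\mathrm{diag}(\sigma_1(A)^2,\dots,\sigma_m(A)^2)P^t$. Set $\mathcal H_{P,k}=\mathrm{span}_{\mathbb R}\{X_1(P),\dots,X_k(P)\}$ and $\mathcal C_{P,k}=\mathrm{span}_{\mathbb R}\{X_k(P),\dots,X_m(P)\}$. For a subspace $\mathcal H$ with inner product $h$, $\operatorname{diam}(G,\mathcal H,h)\in(0,\infty]$ is the diameter of the left-invariant sub-Riemannian structure: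 horizontal curves satisfy $\gamma'(t)\in dL_{\gamma(t)}(\mathcal H)$ ($L_a$ left multiplication), length $\int h(dL_{\gamma(t)}^{-1}\gamma'(t),dL_{\gamma(t)}^{-1}\gamma'(t))^{1/2}dt$, distance = infimum over horizontal curves ($\infty$ if none), diameter = supremum of distances. For a positive semi-definite symmetric bilinear form $b$ on $\mathfrak g$, $\operatorname{diam}(G,b)$ is defined the same way using all smooth curves with length $\int b(dL_{\gamma(t)}^{-1}\gamma'(t),dL_{\gamma(t)}^{-1}\gamma'(t))^{1/2}dt$ (a pseudo-distance). For a subspace $\mathcal C$, $g_I|^*_{\mathcal C}$ is the form $g_I|^*_{\mathcal C}(X_1+X_2,Y_1+Y_2)=g_I(X_1,Y_1)$ for $X_1,Y_1\in\mathcal C$, $X_2,Y_2\in\mathcal C^{\perp_{g_I}}$. *)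

theory Defs
  imports "HOL-Analysis.Analysis" "Jordan_Normal_Form.Char_Poly"
begin

type_synonym 'n sqm = "real^'n^'n"

abbreviation idm :: "'n::finite sqm" where "idm \<equiv> Finite_Cartesian_Product.mat 1"

definition compact_connected_matrix_group :: "('n::finite) sqm set \<Rightarrow> bool" where
  "compact_connected_matrix_group G \<longleftrightarrow>
     G \<subseteq> {g. invertible g} \<and> idm \<in> G \<and>
     (\<forall>g\<in>G. \<forall>h\<in>G. g ** h \<in> G) \<and> (\<forall>g\<in>G. matrix_inv g \<in> G) \<and>
     compact G \<and> connected G"

definition lie_algebra :: "('n::finite) sqm set \<Rightarrow> 'n sqm set" where
  "lie_algebra G = {X. \<exists>\<gamma>. (\<forall>t. \<gamma> t \<in> G) \<and> \<gamma> 0 = idm \<and> (\<gamma> has_vector_derivative X) (at 0)}"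

definition smooth_curve :: "(real \<Rightarrow> 'a::real_normed_vector) \<Rightarrow> bool" where
  "smooth_curve \<gamma> \<longleftrightarrow> (\<exists>D::nat \<Rightarrow> real \<Rightarrow> 'a. D 0 = \<gamma> \<and>
      (\<forall>n. \<forall>t\<in>{0..1}. (D n has_vector_derivative D (Suc n) t) (at t within {0..1})))"

definition left_vel :: "(real \<Rightarrow> ('n::finite) sqm) \<Rightarrow> real \<Rightarrow> 'n sqm" where
  "left_vel \<gamma> t = matrix_inv (\<gamma> t) ** vector_derivative \<gamma> (at t within {0..1})"

definition curve_length :: "('n::finite sqm \<Rightarrow> 'n sqm \<Rightarrow> real) \<Rightarrow> (real \<Rightarrow> 'n sqm) \<Rightarrow> real" where
  "curve_length b \<gamma> = integral {0..1} (\<lambda>t. sqrt (b (left_vel \<gamma> t) (left_vel \<gamma> t)))"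

definition curve_in :: "('n::finite) sqm set \<Rightarrow> (real \<Rightarrow> 'n sqm) \<Rightarrow> 'n sqm \<Rightarrow> 'n sqm \<Rightarrow> bool" where
  "curve_in G \<gamma> p q \<longleftrightarrow> smooth_curve \<gamma> \<and> (\<forall>t\<in>{0..1}. \<gamma> t \<in> G) \<and> \<gamma> 0 = p \<and> \<gamma> 1 = q"

definition diam_form :: "('n::finite) sqm set \<Rightarrow> ('n sqm \<Rightarrow> 'n sqm \<Rightarrow> real) \<Rightarrow> ereal" where
  "diam_form G b = (SUP p\<in>G. SUP q\<in>G. INF \<gamma>\<in>{\<gamma>. curve_in G \<gamma> p q}. ereal (curve_length b \<gamma>))"

text \<open>Diameter of the left-invariant sub-Riemannian structure (H, h); Inf {} = \<infinity>.\<close>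
definition diam_sr :: "('n::finite) sqm set \<Rightarrow> 'n sqm set \<Rightarrow> ('n sqm \<Rightarrow> 'n sqm \<Rightarrow> real) \<Rightarrow> ereal" where
  "diam_sr G H h = (SUP p\<in>G. SUP q\<in>G. INF \<gamma>\<in>{\<gamma>. curve_in G \<gamma> p q \<and> (\<forall>t\<in>{0..1}. left_vel \<gamma> t \<in> H)}.
       ereal (curve_length h \<gamma>))"

definition basis_tw :: "nat \<Rightarrow> (nat \<Rightarrow> ('n::finite) sqm) \<Rightarrow> real mat \<Rightarrow> nat \<Rightarrow> 'n sqm" where
  "basis_tw m X A j = (\<Sum>i<m. (A $$ (i,j)) *\<^sub>R X i)"

text \<open>g_A: the inner product on the span with orthonormal basis X_0(A),...,X_{m-1}(A).\<close>
definition coords :: "nat \<Rightarrow> (nat \<Rightarrow> ('n::finite) sqm) \<Rightarrow> 'n sqm \<Rightarrow> nat \<Rightarrow> real" where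
  "coords m Y Z = (THE c. (\<forall>j\<ge>m. c j = 0) \<and> Z = (\<Sum>j<m. c j *\<^sub>R Y j))"

definition metric_A :: "nat \<Rightarrow> (nat \<Rightarrow> ('n::finite) sqm) \<Rightarrow> real mat \<Rightarrow> 'n sqm \<Rightarrow> 'n sqm \<Rightarrow> real" where
  "metric_A m X A Z W = (\<Sum>j<m. coords m (basis_tw m X A) Z j * coords m (basis_tw m X A) W j)"

definition orth_comp_part :: "('n::finite sqm \<Rightarrow> 'n sqm \<Rightarrow> real) \<Rightarrow> 'n sqm set \<Rightarrow> 'n sqm \<Rightarrow> 'n sqm" where
  "orth_comp_part g C Z = (THE Z1. Z1 \<in> C \<and> (\<forall>V\<in>C. g (Z - Z1) V = 0))"

definition restr_star :: "('n::finite sqm \<Rightarrow> 'n sqm \<Rightarrow> real) \<Rightarrow> 'n sqm set \<Rightarrow> 'n sqm \<Rightarrow> 'n sqm \<Rightarrow> real" where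
  "restr_star g C Z W = g (orth_comp_part g C Z) (orth_comp_part g C W)"

definition sing_vals :: "real mat \<Rightarrow> real list" where
  "sing_vals A = rev (sort (map sqrt (sorted_list_of_multiset (proots (char_poly (A * transpose_mat A))))))"

definition sigma :: "real mat \<Rightarrow> nat \<Rightarrow> real" where
  "sigma A k = sing_vals A ! (k - 1)"

definition sorts :: "nat \<Rightarrow> real mat \<Rightarrow> real mat \<Rightarrow> bool" where
  "sorts m P A \<longleftrightarrow> P \<in> carrier_mat m m \<and> P * transpose_mat P = 1\<^sub>m m \<and>
     A * transpose_mat A = P * Matrix.mat m m (\<lambda>(i,j). if i = j then (sigma A (i+1))\<^sup>2 else 0) * transpose_mat P"

end

theory Submission
  imports Defs
begin


lemma invertible_mat_det:
  fixes A :: "real mat"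
  assumes A: "A \<in> carrier_mat m m" and inv: "invertible_mat A"
  shows "det A \<noteq> 0"
proof -
  from inv obtain B where AB: "A * B = 1\<^sub>m (dim_row A)" and BA: "B * A = 1\<^sub>m (dim_row B)"
    unfolding invertible_mat_def inverts_mat_def by blast
  have "dim_col B = m" using AB A by (metis carrier_matD(1) index_mult_mat(3) index_one_mat(3))
  moreover have "dim_row B = m" using BA A by (metis carrier_matD(2) index_mult_mat(3) index_one_mat(3))
  ultimately have B: "B \<in> carrier_mat m m" by auto
  have "det (A * B) = 1" using AB A by simp
  then show ?thesis using det_mult[OF A B] by auto
qed

definition Dmat :: "nat \<Rightarrow> real mat \<Rightarrow> real mat" where
  "Dmat m A = Matrix.mat m m (\<lambda>(i,j). if i = j then (sigma A (i+1))\<^sup>2 else 0)"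

lemma sv_facts:
  fixes A P :: "real mat"
  assumes A: "A \<in> carrier_mat m m" and inv: "invertible_mat A" and S: "sorts m P A"
  shows "length (sing_vals A) = m"
    and "\<And>i. i < m \<Longrightarrow> sigma A (i+1) > 0"
    and "\<And>i j. i \<le> j \<Longrightarrow> j < m \<Longrightarrow> sigma A (j+1) \<le> sigma A (i+1)"
proof -
  let ?D = "Dmat m A"
  let ?M = "A * transpose_mat A"
  have P: "P \<in> carrier_mat m m" and PPt: "P * transpose_mat P = 1\<^sub>m m"
    and MD: "?M = P * ?D * transpose_mat P" using S unfolding sorts_def Dmat_def by auto
  have Pt: "transpose_mat P \<in> carrier_mat m m" using P by simp
  have PtP: "transpose_mat P * P = 1\<^sub>m m" using mat_mult_left_right_inverse[OF P Pt PPt] .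
  have D: "?D \<in> carrier_mat m m" unfolding Dmat_def by simp
  have sim: "similar_mat ?M ?D"
    by (rule similar_matI[where n=m and P=P and Q="transpose_mat P"], insert P Pt D PPt PtP MD, auto)
  have ut: "upper_triangular ?D" unfolding upper_triangular_def Dmat_def by auto
  define ds where "ds = map (\<lambda>i. (sigma A (i+1))\<^sup>2) [0..<m]"
  have diag: "diag_mat ?D = ds" unfolding diag_mat_def ds_def Dmat_def by auto
  have cp: "char_poly ?M = (\<Prod>a\<leftarrow>ds. [:- a, 1:])"
    using char_poly_similar[OF sim] char_poly_upper_triangular[OF D ut] diag by simp
  have "proots (\<Prod>a\<leftarrow>ds. [:- a, 1:]) = (\<Sum>a\<leftarrow>ds. proots [:- a, 1:])"
  proof -
    have "0 \<notin> set (map (\<lambda>a. [:- a, 1:]) ds)" by auto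
    from proots_prod_list[OF this] show ?thesis by (simp add: o_def)
  qed
  also have "\<dots> = mset ds" by (induction ds) auto
  finally have pr: "proots (char_poly ?M) = mset ds" using cp by simp
  have sv: "sing_vals A = rev (sort (map sqrt (sort ds)))"
    unfolding sing_vals_def pr by simp
  show len: "length (sing_vals A) = m" unfolding sv ds_def by simp
  have setsv: "set (sing_vals A) = sqrt ` set ds" unfolding sv by simp
  have "det ?M \<noteq> 0"
    using det_mult[OF A, of "transpose_mat A"] A invertible_mat_det[OF A inv] det_transpose[OF A] by auto
  moreover have "det ?M = det P * det ?D * det (transpose_mat P)"
    using MD det_mult P Pt D by (metis mult_carrier_mat)
  ultimately have "det ?D \<noteq> 0" by auto
  hence "prod_list ds \<noteq> 0" using det_upper_triangular[OF ut D] diag by simp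
  hence nz: "\<forall>d\<in>set ds. d \<noteq> 0" by (auto simp add: prod_list_zero_iff)
  have nn: "\<forall>d\<in>set ds. d \<ge> 0" unfolding ds_def by auto
  have pos: "\<forall>x\<in>set (sing_vals A). x > 0" unfolding setsv using nz nn
    by (metis imageE less_eq_real_def real_sqrt_gt_zero)
  show "\<And>i. i < m \<Longrightarrow> sigma A (i+1) > 0" unfolding sigma_def using pos len by simp
  have so: "sorted (rev (sing_vals A))" unfolding sv by simp
  show "\<And>i j. i \<le> j \<Longrightarrow> j < m \<Longrightarrow> sigma A (j+1) \<le> sigma A (i+1)"
  proof -
    fix i j assume ij: "i \<le> j" "j < m"
    have "rev (sing_vals A) ! (m - 1 - j) \<le> rev (sing_vals A) ! (m - 1 - i)"
      using sorted_nth_mono[OF so, of "m-1-j" "m-1-i"] ij len by simp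
    then show "sigma A (j+1) \<le> sigma A (i+1)" unfolding sigma_def using ij len
      by (simp add: rev_nth)
  qed
qed

lemma invertible_mat_left_inv:
  fixes A :: "real mat"
  assumes A: "A \<in> carrier_mat m m" and inv: "invertible_mat A"
  shows "\<exists>B\<in>carrier_mat m m. B * A = 1\<^sub>m m"
proof -
  from inv obtain B where AB: "A * B = 1\<^sub>m (dim_row A)" and BA: "B * A = 1\<^sub>m (dim_row B)"
    unfolding invertible_mat_def inverts_mat_def by blast
  have "dim_col B = m" using AB A by (metis carrier_matD(1) index_mult_mat(3) index_one_mat(3))
  moreover have "dim_row B = m" using BA A by (metis carrier_matD(2) index_mult_mat(3) index_one_mat(3))
  ultimately have B: "B \<in> carrier_mat m m" by auto
  then show ?thesis using BA \<open>dim_row B = m\<close> by auto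
qed

lemma invertible_mat_inj:
  fixes A :: "real mat"
  assumes A: "A \<in> carrier_mat m m" and inv: "invertible_mat A"
    and v: "v \<in> carrier_vec m" and v': "v' \<in> carrier_vec m" and eq: "A *\<^sub>v v = A *\<^sub>v v'"
  shows "v = v'"
proof -
  obtain B where B: "B \<in> carrier_mat m m" and BA: "B * A = 1\<^sub>m m"
    using invertible_mat_left_inv[OF A inv] by blast
  have "v = (B * A) *\<^sub>v v" using BA v by simp
  also have "\<dots> = B *\<^sub>v (A *\<^sub>v v)" using B A v by simp
  also have "\<dots> = B *\<^sub>v (A *\<^sub>v v')" using eq by simp
  also have "\<dots> = (B * A) *\<^sub>v v'" using B A v' by simp
  also have "\<dots> = v'" using BA v' by simp
  finally show ?thesis .
qed

lemma coord_calc: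
  fixes A P :: "real mat"
  assumes A: "A \<in> carrier_mat m m" and inv: "invertible_mat A" and S: "sorts m P A"
    and xv: "xv \<in> carrier_vec m"
  defines "wv \<equiv> transpose_mat P *\<^sub>v xv"
  defines "u \<equiv> vec m (\<lambda>j. vec_index wv j / (sigma A (j+1))\<^sup>2)"
  defines "cv \<equiv> transpose_mat A *\<^sub>v (P *\<^sub>v u)"
  shows "cv \<in> carrier_vec m" "A *\<^sub>v cv = xv" "scalar_prod cv cv = (\<Sum>j<m. (vec_index wv j)\<^sup>2 / (sigma A (j+1))\<^sup>2)"
proof -
  let ?D = "Dmat m A"
  have P: "P \<in> carrier_mat m m" and PPt: "P * transpose_mat P = 1\<^sub>m m"
    and MD: "A * transpose_mat A = P * ?D * transpose_mat P" using S unfolding sorts_def Dmat_def by auto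
  have Pt: "transpose_mat P \<in> carrier_mat m m" using P by simp
  have At: "transpose_mat A \<in> carrier_mat m m" using A by simp
  have PtP: "transpose_mat P * P = 1\<^sub>m m" using mat_mult_left_right_inverse[OF P Pt PPt] .
  have D: "?D \<in> carrier_mat m m" unfolding Dmat_def by simp
  have wv: "wv \<in> carrier_vec m" unfolding wv_def using Pt xv by simp
  have u: "u \<in> carrier_vec m" unfolding u_def by simp
  have Pu: "P *\<^sub>v u \<in> carrier_vec m" using P u by simp
  show cv: "cv \<in> carrier_vec m" unfolding cv_def using At Pu by simp
  have pos: "\<And>j. j < m \<Longrightarrow> sigma A (j+1) > 0" using sv_facts(2)[OF A inv S] .
  have Du: "?D *\<^sub>v u = wv"
  proof (rule eq_vecI)
    fix j assume j: "j < dim_vec wv"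
    hence jm: "j < m" using wv by simp
    have "vec_index (?D *\<^sub>v u) j = scalar_prod (row ?D j) u" using jm D by simp
    also have "\<dots> = (\<Sum>l\<in>{0..<m}. (if j = l then (sigma A (j+1))\<^sup>2 * vec_index u l else 0))"
      unfolding scalar_prod_def using jm u by (intro sum.cong) (auto simp: Dmat_def)
    also have "\<dots> = (sigma A (j+1))\<^sup>2 * vec_index u j" using jm by (simp add: sum.delta)
    also have "\<dots> = vec_index wv j" using jm pos[OF jm] unfolding u_def by simp
    finally show "vec_index (?D *\<^sub>v u) j = vec_index wv j" .
  qed (insert D u wv, auto)
  have "A *\<^sub>v cv = (A * transpose_mat A) *\<^sub>v (P *\<^sub>v u)" unfolding cv_def using A At Pu by simp
  also have "\<dots> = (P * ?D * transpose_mat P) *\<^sub>v (P *\<^sub>v u)" using MD by simp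
  also have "\<dots> = P *\<^sub>v (?D *\<^sub>v ((transpose_mat P * P) *\<^sub>v u))"
    using P D Pt u Pu by (simp add: assoc_mult_mat_vec[of _ m m _ m] )
  also have "\<dots> = P *\<^sub>v wv" using PtP u Du by simp
  also have "\<dots> = (P * transpose_mat P) *\<^sub>v xv" unfolding wv_def using P Pt xv by simp
  also have "\<dots> = xv" using PPt xv by simp
  finally show Acv: "A *\<^sub>v cv = xv" .
  have "scalar_prod cv cv = scalar_prod (P *\<^sub>v u) (A *\<^sub>v cv)"
    unfolding cv_def using transpose_vec_mult_scalar[OF A, of "transpose_mat A *\<^sub>v (P *\<^sub>v u)" "P *\<^sub>v u"] At Pu
    by simp
  also have "\<dots> = scalar_prod (P *\<^sub>v u) xv" using Acv by simp
  also have "\<dots> = scalar_prod (transpose_mat (transpose_mat P) *\<^sub>v u) xv" by simp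
  also have "\<dots> = scalar_prod u wv" unfolding wv_def using transpose_vec_mult_scalar[OF Pt xv u] .
  also have "\<dots> = (\<Sum>j<m. (vec_index wv j)\<^sup>2 / (sigma A (j+1))\<^sup>2)"
    unfolding scalar_prod_def u_def using wv by (auto simp: power2_eq_square lessThan_atLeast0 intro!: sum.cong)
  finally show "scalar_prod cv cv = (\<Sum>j<m. (vec_index wv j)\<^sup>2 / (sigma A (j+1))\<^sup>2)" .
qed



lemma bil_lsum: "bilinear h \<Longrightarrow> h (\<Sum>i\<in>S. f i) y = (\<Sum>i\<in>S. h (f i) y)"
  unfolding bilinear_def using linear_sum[of "\<lambda>x. h x y"] by auto
lemma bil_rsum: "bilinear h \<Longrightarrow> h y (\<Sum>i\<in>S. f i) = (\<Sum>i\<in>S. h y (f i))"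
  unfolding bilinear_def using linear_sum[of "\<lambda>x. h y x"] by auto

lemma basis_change:
  "(\<Sum>j\<in>J. c j *\<^sub>R (\<Sum>i\<in>I. M i j *\<^sub>R (Xs i :: 'a::real_vector))) = (\<Sum>i\<in>I. (\<Sum>j\<in>J. M i j * c j) *\<^sub>R Xs i)"
  by (simp add: scaleR_sum_right scaleR_sum_left sum.swap[of _ J I] mult.commute)

locale LA =
  fixes gI :: "'n::finite sqm \<Rightarrow> 'n sqm \<Rightarrow> real" and X :: "nat \<Rightarrow> 'n sqm" and m :: nat
  assumes bil: "bilinear gI"
    and on: "\<forall>i<m. \<forall>j<m. gI (X i) (X j) = (if i = j then 1 else 0)"
    and pos: "\<forall>Z\<in>span (X ` {..<m}). Z \<noteq> 0 \<longrightarrow> gI Z Z > 0"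
begin

abbreviation "VV \<equiv> span (X ` {..<m})"

lemma lsum: "gI (\<Sum>i\<in>S. f i) y = (\<Sum>i\<in>S. gI (f i) y)" using bil_lsum[OF bil] .
lemma rsum: "gI y (\<Sum>i\<in>S. f i) = (\<Sum>i\<in>S. gI y (f i))" using bil_rsum[OF bil] .
lemma lmul: "gI (c *\<^sub>R x) y = c * gI x y" using bilinear_lmul[OF bil] by simp
lemma rmul: "gI x (c *\<^sub>R y) = c * gI x y" using bilinear_rmul[OF bil] by simp
lemma ladd: "gI (x + y) z = gI x z + gI y z" using bilinear_ladd[OF bil] .
lemma radd: "gI z (x + y) = gI z x + gI z y" using bilinear_radd[OF bil] .
lemma lsub: "gI (x - y) z = gI x z - gI y z" using bilinear_lsub[OF bil] .
lemma rsub: "gI z (x - y) = gI z x - gI z y" using bilinear_rsub[OF bil] .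
lemma lzero: "gI 0 z = 0" using bilinear_lzero[OF bil] .
lemma rzero: "gI z 0 = 0" using bilinear_rzero[OF bil] .

lemma X_V: "i < m \<Longrightarrow> X i \<in> VV" by (simp add: span_base)

lemma sum_gl: "l < m \<Longrightarrow> gI (\<Sum>i<m. a i *\<^sub>R X i) (X l) = a l"
proof -
  assume l: "l < m"
  have "gI (\<Sum>i<m. a i *\<^sub>R X i) (X l) = (\<Sum>i<m. a i * (if i = l then 1 else 0))"
    unfolding lsum lmul using on l by (intro sum.cong) auto
  also have "\<dots> = a l" using l by (simp add: if_distrib sum.delta cong: if_cong)
  finally show ?thesis .
qed

lemma expand: "Z \<in> VV \<Longrightarrow> Z = (\<Sum>i<m. gI Z (X i) *\<^sub>R X i)"
proof (induction rule: span_induct_alt)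
  case base
  then show ?case by (simp add: lzero)
next
  case (step c x y)
  then obtain j where j: "j < m" "x = X j" by auto
  have xx: "x = (\<Sum>i<m. gI x (X i) *\<^sub>R X i)"
  proof -
    have "(\<Sum>i<m. gI x (X i) *\<^sub>R X i) = (\<Sum>i<m. (if i = j then X i else 0))"
      using on j by (intro sum.cong) auto
    also have "\<dots> = x" using j by (simp add: sum.delta')
    finally show ?thesis by simp
  qed
  have "(\<Sum>i<m. gI (c *\<^sub>R x + y) (X i) *\<^sub>R X i) = c *\<^sub>R (\<Sum>i<m. gI x (X i) *\<^sub>R X i) + (\<Sum>i<m. gI y (X i) *\<^sub>R X i)"
    by (simp add: ladd lmul scaleR_add_left sum.distrib scaleR_sum_right)
  then show ?case using step(2) xx by simp
qed

end


locale LAP = LA gI X m for gI :: "'n::finite sqm \<Rightarrow> 'n sqm \<Rightarrow> real" and X m +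
  fixes P :: "real mat"
  assumes P: "P \<in> carrier_mat m m" and PPt: "P * transpose_mat P = 1\<^sub>m m"
begin

abbreviation "Y \<equiv> basis_tw m X P"
definition w :: "'n sqm \<Rightarrow> nat \<Rightarrow> real" where "w Z j = gI Z (Y j)"

lemma PtP: "transpose_mat P * P = 1\<^sub>m m"
  using mat_mult_left_right_inverse[OF P _ PPt] P by simp

lemma orthP1: "a < m \<Longrightarrow> b < m \<Longrightarrow> (\<Sum>i<m. P $$ (i,a) * P $$ (i,b)) = (if a = b then 1 else 0)"
proof -
  assume ab: "a < m" "b < m"
  have "(transpose_mat P * P) $$ (a,b) = (if a = b then 1 else 0)" using PtP ab by simp
  moreover have "(transpose_mat P * P) $$ (a,b) = (\<Sum>i<m. P $$ (i,a) * P $$ (i,b))"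
    using ab P by (simp add: scalar_prod_def lessThan_atLeast0)
  ultimately show ?thesis by simp
qed

lemma orthP2: "a < m \<Longrightarrow> b < m \<Longrightarrow> (\<Sum>j<m. P $$ (a,j) * P $$ (b,j)) = (if a = b then 1 else 0)"
proof -
  assume ab: "a < m" "b < m"
  have "(P * transpose_mat P) $$ (a,b) = (if a = b then 1 else 0)" using PPt ab by simp
  moreover have "(P * transpose_mat P) $$ (a,b) = (\<Sum>j<m. P $$ (a,j) * P $$ (b,j))"
    using ab P by (simp add: scalar_prod_def lessThan_atLeast0)
  ultimately show ?thesis by simp
qed

lemma Y_V: "Y j \<in> VV"
  unfolding basis_tw_def by (intro span_sum span_scale span_base) auto

lemma w_eq: "w Z b = (\<Sum>l<m. P $$ (l,b) * gI Z (X l))"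
  unfolding w_def basis_tw_def rsum rmul by simp

lemma gYX: "l < m \<Longrightarrow> gI (Y a) (X l) = P $$ (l,a)"
  unfolding basis_tw_def by (rule sum_gl)

lemma gY: "a < m \<Longrightarrow> b < m \<Longrightarrow> gI (Y a) (Y b) = (if a = b then 1 else 0)"
proof -
  assume ab: "a < m" "b < m"
  have "gI (Y a) (Y b) = (\<Sum>l<m. P $$ (l,b) * P $$ (l,a))"
    using w_eq[of "Y a" b] gYX unfolding w_def by simp
  also have "\<dots> = (if a = b then 1 else 0)" using orthP1[OF ab(2) ab(1)] by auto
  finally show ?thesis .
qed

lemma sumY_gl: "S \<subseteq> {..<m} \<Longrightarrow> l < m \<Longrightarrow> gI (\<Sum>j\<in>S. c j *\<^sub>R Y j) (Y l) = (if l \<in> S then c l else 0)"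
proof -
  assume S: "S \<subseteq> {..<m}" and l: "l < m"
  have fin: "finite S" using S finite_subset by blast
  have "gI (\<Sum>j\<in>S. c j *\<^sub>R Y j) (Y l) = (\<Sum>j\<in>S. if j = l then c j else 0)"
    unfolding lsum lmul using gY S l by (intro sum.cong) auto
  also have "\<dots> = (if l \<in> S then c l else 0)" using fin by (simp add: sum.delta')
  finally show ?thesis .
qed

lemma expandY: "Z \<in> VV \<Longrightarrow> Z = (\<Sum>j<m. w Z j *\<^sub>R Y j)"
proof -
  assume Z: "Z \<in> VV"
  have "(\<Sum>j<m. w Z j *\<^sub>R Y j) = (\<Sum>i<m. (\<Sum>j<m. P $$ (i,j) * w Z j) *\<^sub>R X i)"
    unfolding basis_tw_def by (rule basis_change)
  also have "\<dots> = (\<Sum>i<m. gI Z (X i) *\<^sub>R X i)"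
  proof (rule sum.cong[OF refl])
    fix i assume i: "i \<in> {..<m}"
    have "(\<Sum>j<m. P $$ (i,j) * w Z j) = (\<Sum>j<m. \<Sum>l<m. P $$ (i,j) * P $$ (l,j) * gI Z (X l))"
      unfolding w_eq by (simp add: sum_distrib_left mult.assoc)
    also have "\<dots> = (\<Sum>l<m. (\<Sum>j<m. P $$ (i,j) * P $$ (l,j)) * gI Z (X l))"
      by (subst sum.swap) (simp add: sum_distrib_right)
    also have "\<dots> = (\<Sum>l<m. (if i = l then gI Z (X l) else 0))"
      using orthP2 i by (intro sum.cong) auto
    also have "\<dots> = gI Z (X i)" using i by (simp add: sum.delta)
    finally show "(\<Sum>j<m. P $$ (i,j) * w Z j) *\<^sub>R X i = gI Z (X i) *\<^sub>R X i" by simp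
  qed
  also have "\<dots> = Z" using expand[OF Z] by simp
  finally show ?thesis by simp
qed

lemma gZZ: "Z \<in> VV \<Longrightarrow> gI Z Z = (\<Sum>j<m. (w Z j)\<^sup>2)"
proof -
  assume Z: "Z \<in> VV"
  have "gI Z Z = gI Z (\<Sum>j<m. w Z j *\<^sub>R Y j)" using expandY[OF Z] by simp
  also have "\<dots> = (\<Sum>j<m. (w Z j)\<^sup>2)" unfolding rsum rmul by (simp add: w_def power2_eq_square)
  finally show ?thesis .
qed

lemma spanY_sub: "span (Y ` S) \<subseteq> VV"
  by (rule span_minimal) (auto simp: Y_V)

lemma spanY_w0: "S \<subseteq> {..<m} \<Longrightarrow> Z \<in> span (Y ` S) \<Longrightarrow> j < m \<Longrightarrow> j \<notin> S \<Longrightarrow> w Z j = 0"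
proof -
  assume S: "S \<subseteq> {..<m}" and Z: "Z \<in> span (Y ` S)" and j: "j < m" "j \<notin> S"
  from Z show ?thesis
  proof (induction rule: span_induct_alt)
    case base
    then show ?case by (simp add: w_def lzero)
  next
    case (step c x y)
    then obtain s where s: "s \<in> S" "x = Y s" by auto
    have "gI x (Y j) = 0" using s S j gY by auto
    then show ?case using step by (simp add: w_def ladd lmul)
  qed
qed

lemma orth_part:
  assumes S: "S \<subseteq> {..<m}" and Z: "Z \<in> VV"
  shows "orth_comp_part gI (span (Y ` S)) Z = (\<Sum>j\<in>S. w Z j *\<^sub>R Y j)"
proof -
  let ?C = "span (Y ` S)"
  let ?Z1 = "(\<Sum>j\<in>S. w Z j *\<^sub>R Y j)"
  have fin: "finite S" using S finite_subset by blast
  have Z1C: "?Z1 \<in> ?C" by (intro span_sum span_scale span_base) auto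
  have diff: "Z - ?Z1 = (\<Sum>j\<in>{..<m} - S. w Z j *\<^sub>R Y j)"
  proof -
    have "Z = (\<Sum>j<m. w Z j *\<^sub>R Y j)" using expandY[OF Z] .
    also have "\<dots> = (\<Sum>j\<in>{..<m} - S. w Z j *\<^sub>R Y j) + ?Z1"
      using sum.subset_diff[OF S, of "\<lambda>j. w Z j *\<^sub>R Y j"] by simp
    finally show ?thesis by (simp add: algebra_simps)
  qed
  have orth: "\<forall>V\<in>?C. gI (Z - ?Z1) V = 0"
  proof
    fix V assume "V \<in> ?C"
    then show "gI (Z - ?Z1) V = 0"
    proof (induction rule: span_induct_alt)
      case base
      then show ?case by (simp add: rzero)
    next
      case (step c x y)
      then obtain s where s: "s \<in> S" "x = Y s" by auto
      have "gI (Z - ?Z1) x = 0" unfolding diff s(2) using sumY_gl[of "{..<m} - S"] s S by auto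
      then show ?case using step by (simp add: radd rmul)
    qed
  qed
  show ?thesis
  proof (unfold orth_comp_part_def, rule the_equality)
    show "?Z1 \<in> ?C \<and> (\<forall>V\<in>?C. gI (Z - ?Z1) V = 0)" using Z1C orth by blast
  next
    fix Z1' assume h: "Z1' \<in> ?C \<and> (\<forall>V\<in>?C. gI (Z - Z1') V = 0)"
    let ?D = "?Z1 - Z1'"
    have DC: "?D \<in> ?C" using h Z1C span_diff by blast
    have DV: "?D \<in> VV" using DC spanY_sub by blast
    have "gI ?D ?D = gI (Z - Z1') ?D - gI (Z - ?Z1) ?D" by (simp add: lsub[symmetric] algebra_simps)
    also have "\<dots> = 0" using h orth DC by simp
    finally have "?D = 0" using pos DV by fastforce
    then show "Z1' = ?Z1" by simp
  qed
qed

lemma restr_eq: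
  assumes S: "S \<subseteq> {..<m}" and Z: "Z \<in> VV"
  shows "restr_star gI (span (Y ` S)) Z Z = (\<Sum>j\<in>S. (w Z j)\<^sup>2)"
proof -
  let ?Z1 = "(\<Sum>j\<in>S. w Z j *\<^sub>R Y j)"
  have "restr_star gI (span (Y ` S)) Z Z = gI ?Z1 ?Z1" unfolding restr_star_def orth_part[OF S Z] ..
  also have "\<dots> = (\<Sum>j\<in>S. w Z j * gI ?Z1 (Y j))" unfolding rsum rmul by simp
  also have "\<dots> = (\<Sum>j\<in>S. (w Z j)\<^sup>2)"
    using sumY_gl[OF S] S by (intro sum.cong) (auto simp: power2_eq_square)
  finally show ?thesis .
qed


lemma tw_expand: "l < m \<Longrightarrow> gI (\<Sum>j<m. c j *\<^sub>R basis_tw m X A j) (X l) = (\<Sum>j<m. A $$ (l,j) * c j)"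
  unfolding basis_tw_def basis_change by (rule sum_gl)

lemma metricA_eq:
  assumes A: "A \<in> carrier_mat m m" and inv: "invertible_mat A" and S: "sorts m P A" and Z: "Z \<in> VV"
  shows "metric_A m X A Z Z = (\<Sum>j<m. (w Z j)\<^sup>2 / (sigma A (j+1))\<^sup>2)"
proof -
  define xv where "xv = vec m (\<lambda>i. gI Z (X i))"
  have xv: "xv \<in> carrier_vec m" unfolding xv_def by simp
  define wv where "wv = transpose_mat P *\<^sub>v xv"
  define u where "u = vec m (\<lambda>j. vec_index wv j / (sigma A (j+1))\<^sup>2)"
  define cv where "cv = transpose_mat A *\<^sub>v (P *\<^sub>v u)"
  note cc = coord_calc[OF A inv S xv, folded wv_def, folded u_def, folded cv_def]
  have wvw: "\<And>j. j < m \<Longrightarrow> vec_index wv j = w Z j"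
    unfolding wv_def xv_def w_eq using P by (simp add: scalar_prod_def lessThan_atLeast0 mult.commute)
  define c where "c = (\<lambda>j. if j < m then vec_index cv j else 0)"
  have Ac: "\<And>l. l < m \<Longrightarrow> (\<Sum>j<m. A $$ (l,j) * c j) = gI Z (X l)"
  proof -
    fix l assume l: "l < m"
    have "(\<Sum>j<m. A $$ (l,j) * c j) = vec_index (A *\<^sub>v cv) l"
      using l A cc(1) by (simp add: c_def scalar_prod_def lessThan_atLeast0)
    also have "\<dots> = gI Z (X l)" using cc(2) l unfolding xv_def by simp
    finally show "(\<Sum>j<m. A $$ (l,j) * c j) = gI Z (X l)" .
  qed
  have co: "coords m (basis_tw m X A) Z = c"
  proof (unfold coords_def, rule the_equality)
    have "(\<Sum>j<m. c j *\<^sub>R basis_tw m X A j) = (\<Sum>i<m. (\<Sum>j<m. A $$ (i,j) * c j) *\<^sub>R X i)"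
      unfolding basis_tw_def by (rule basis_change)
    also have "\<dots> = (\<Sum>i<m. gI Z (X i) *\<^sub>R X i)" using Ac by simp
    also have "\<dots> = Z" using expand[OF Z] by simp
    finally show "(\<forall>j\<ge>m. c j = 0) \<and> Z = (\<Sum>j<m. c j *\<^sub>R basis_tw m X A j)" by (simp add: c_def)
  next
    fix c' assume h: "(\<forall>j\<ge>m. c' j = 0) \<and> Z = (\<Sum>j<m. c' j *\<^sub>R basis_tw m X A j)"
    have "A *\<^sub>v vec m c' = A *\<^sub>v cv"
    proof (rule eq_vecI)
      fix l assume "l < dim_vec (A *\<^sub>v cv)"
      hence l: "l < m" using A by simp
      have "vec_index (A *\<^sub>v vec m c') l = (\<Sum>j<m. A $$ (l,j) * c' j)"
        using l A by (simp add: scalar_prod_def lessThan_atLeast0)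
      also have "\<dots> = gI Z (X l)" using tw_expand[OF l, of c'] h by simp
      also have "\<dots> = vec_index (A *\<^sub>v cv) l" using cc(2) l unfolding xv_def by simp
      finally show "vec_index (A *\<^sub>v vec m c') l = vec_index (A *\<^sub>v cv) l" .
    qed (insert A, auto)
    hence "vec m c' = cv" using invertible_mat_inj[OF A inv _ cc(1)] by simp
    then show "c' = c" unfolding c_def using h by (auto simp: fun_eq_iff)
  qed
  have "metric_A m X A Z Z = (\<Sum>j<m. c j * c j)" unfolding metric_A_def co ..
  also have "\<dots> = scalar_prod cv cv" using cc(1) by (simp add: c_def scalar_prod_def lessThan_atLeast0)
  also have "\<dots> = (\<Sum>j<m. (vec_index wv j)\<^sup>2 / (sigma A (j+1))\<^sup>2)" using cc(3) .
  also have "\<dots> = (\<Sum>j<m. (w Z j)\<^sup>2 / (sigma A (j+1))\<^sup>2)" using wvw by simp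
  finally show ?thesis .
qed


lemma pointwise1:
  assumes A: "A \<in> carrier_mat m m" and inv: "invertible_mat A" and S: "sorts m P A" and Z: "Z \<in> VV"
    and k: "1 \<le> k" "k \<le> m"
  shows "restr_star gI (span (Y ` {k-1..<m})) Z Z \<le> (sigma A k)\<^sup>2 * metric_A m X A Z Z"
proof -
  have sub: "{k-1..<m} \<subseteq> {..<m}" by auto
  have sk: "sigma A k > 0" using sv_facts(2)[OF A inv S, of "k-1"] k by simp
  have "restr_star gI (span (Y ` {k-1..<m})) Z Z = (\<Sum>j\<in>{k-1..<m}. (w Z j)\<^sup>2)" using restr_eq[OF sub Z] .
  also have "\<dots> \<le> (\<Sum>j\<in>{k-1..<m}. (sigma A k)\<^sup>2 * ((w Z j)\<^sup>2 / (sigma A (j+1))\<^sup>2))"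
  proof (rule sum_mono)
    fix j assume j: "j \<in> {k-1..<m}"
    have sj: "sigma A (j+1) > 0" using sv_facts(2)[OF A inv S] j by simp
    have "sigma A (j+1) \<le> sigma A (k-1+1)" using sv_facts(3)[OF A inv S, of "k-1" j] j by simp
    hence le: "sigma A (j+1) \<le> sigma A k" using k by simp
    hence "(sigma A (j+1))\<^sup>2 \<le> (sigma A k)\<^sup>2" using sj by (simp add: power_mono)
    hence "1 \<le> (sigma A k)\<^sup>2 / (sigma A (j+1))\<^sup>2" using sj by simp
    hence "(w Z j)\<^sup>2 * 1 \<le> (w Z j)\<^sup>2 * ((sigma A k)\<^sup>2 / (sigma A (j+1))\<^sup>2)"
      by (intro mult_left_mono) auto
    then show "(w Z j)\<^sup>2 \<le> (sigma A k)\<^sup>2 * ((w Z j)\<^sup>2 / (sigma A (j+1))\<^sup>2)" by (simp add: mult.commute)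
  qed
  also have "\<dots> \<le> (\<Sum>j<m. (sigma A k)\<^sup>2 * ((w Z j)\<^sup>2 / (sigma A (j+1))\<^sup>2))"
    by (rule sum_mono2) auto
  also have "\<dots> = (sigma A k)\<^sup>2 * metric_A m X A Z Z"
    unfolding metricA_eq[OF A inv S Z] sum_distrib_left ..
  finally show ?thesis .
qed

lemma pointwise2:
  assumes A: "A \<in> carrier_mat m m" and inv: "invertible_mat A" and S: "sorts m P A"
    and Z: "Z \<in> span (Y ` {..<k})" and k: "1 \<le> k" "k \<le> m"
  shows "(sigma A k)\<^sup>2 * metric_A m X A Z Z \<le> gI Z Z"
proof -
  have sub: "{..<k} \<subseteq> {..<m}" using k by auto
  have ZV: "Z \<in> VV" using Z spanY_sub by blast
  have "(sigma A k)\<^sup>2 * metric_A m X A Z Z = (\<Sum>j<m. (sigma A k)\<^sup>2 * ((w Z j)\<^sup>2 / (sigma A (j+1))\<^sup>2))"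
    unfolding metricA_eq[OF A inv S ZV] sum_distrib_left ..
  also have "\<dots> \<le> (\<Sum>j<m. (w Z j)\<^sup>2)"
  proof (rule sum_mono)
    fix j assume j: "j \<in> {..<m}"
    show "(sigma A k)\<^sup>2 * ((w Z j)\<^sup>2 / (sigma A (j+1))\<^sup>2) \<le> (w Z j)\<^sup>2"
    proof (cases "j < k")
      case True
      have sj: "sigma A (j+1) > 0" using sv_facts(2)[OF A inv S] j by simp
      have sk: "sigma A k > 0" using sv_facts(2)[OF A inv S, of "k-1"] k by simp
      have "sigma A (k-1+1) \<le> sigma A (j+1)" using sv_facts(3)[OF A inv S, of j "k-1"] True k by simp
      hence "sigma A k \<le> sigma A (j+1)" using k by simp
      hence "(sigma A k)\<^sup>2 \<le> (sigma A (j+1))\<^sup>2" using sk by (simp add: power_mono)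
      hence "(sigma A k)\<^sup>2 / (sigma A (j+1))\<^sup>2 \<le> 1" using sj by simp
      hence "(w Z j)\<^sup>2 * ((sigma A k)\<^sup>2 / (sigma A (j+1))\<^sup>2) \<le> (w Z j)\<^sup>2 * 1"
        by (intro mult_left_mono) auto
      then show ?thesis by (simp add: mult.commute)
    next
      case False
      then have "w Z j = 0" using spanY_w0[OF sub Z] j by auto
      then show ?thesis by simp
    qed
  qed
  also have "\<dots> = gI Z Z" using gZZ[OF ZV] by simp
  finally show ?thesis .
qed

lemma pointwise1':
  assumes A: "A \<in> carrier_mat m m" and inv: "invertible_mat A" and S: "sorts m P A" and Z: "Z \<in> VV"
    and k: "1 \<le> k" "k \<le> m"
  shows "sqrt (restr_star gI (span (Y ` {k-1..<m})) Z Z) \<le> sigma A k * sqrt (metric_A m X A Z Z)"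
proof -
  have sk: "sigma A k > 0" using sv_facts(2)[OF A inv S, of "k-1"] k by simp
  have "sqrt (restr_star gI (span (Y ` {k-1..<m})) Z Z) \<le> sqrt ((sigma A k)\<^sup>2 * metric_A m X A Z Z)"
    using pointwise1[OF assms] by simp
  also have "\<dots> = sigma A k * sqrt (metric_A m X A Z Z)" using sk by (simp add: real_sqrt_mult)
  finally show ?thesis .
qed

lemma pointwise2':
  assumes A: "A \<in> carrier_mat m m" and inv: "invertible_mat A" and S: "sorts m P A"
    and Z: "Z \<in> span (Y ` {..<k})" and k: "1 \<le> k" "k \<le> m"
  shows "sigma A k * sqrt (metric_A m X A Z Z) \<le> sqrt (gI Z Z)"
proof -
  have sk: "sigma A k > 0" using sv_facts(2)[OF A inv S, of "k-1"] k by simp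
  have "sigma A k * sqrt (metric_A m X A Z Z) = sqrt ((sigma A k)\<^sup>2 * metric_A m X A Z Z)"
    using sk by (simp add: real_sqrt_mult)
  also have "\<dots> \<le> sqrt (gI Z Z)" using pointwise2[OF assms] by simp
  finally show ?thesis .
qed

end



lemma mm_add_r: "((A::real^'n^'m) + B) ** C = A ** C + B ** C"
  by (vector matrix_matrix_mult_def sum.distrib[symmetric] field_simps)

lemma mm_diff_l: "(A::real^'n^'m) ** (B - C) = A ** B - A ** C"
  by (vector matrix_matrix_mult_def sum_subtractf[symmetric] field_simps)
lemma mm_diff_r: "((A::real^'n^'m) - B) ** C = A ** C - B ** C"
  by (vector matrix_matrix_mult_def sum_subtractf[symmetric] field_simps)

lemma bilin_mm: "bilinear (\<lambda>(A::real^'n^'n) (B::real^'n^'n). A ** B)"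
  unfolding bilinear_def
  by (auto intro!: linearI simp: matrix_add_ldistrib mm_add_r matrix_scalar_ac scalar_matrix_assoc)

lemma bbl_mm: "bounded_bilinear (\<lambda>(A::real^'n^'n) (B::real^'n^'n). A ** B)"
  using bilinear_conv_bounded_bilinear bilin_mm by blast

lemma minv: "invertible (g::real^'n^'n) \<Longrightarrow> g ** matrix_inv g = idm \<and> matrix_inv g ** g = idm"
  unfolding invertible_def matrix_inv_def by (rule someI_ex)

lemma matrix_inv_cont:
  assumes grp: "compact_connected_matrix_group (G :: ('n::finite) sqm set)"
  shows "continuous_on G matrix_inv"
proof -
  have inv: "\<And>g. g \<in> G \<Longrightarrow> invertible g" using grp unfolding compact_connected_matrix_group_def by blast
  have ginv: "\<And>g. g \<in> G \<Longrightarrow> matrix_inv g \<in> G" using grp unfolding compact_connected_matrix_group_def by blast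
  have cpt: "compact G" using grp unfolding compact_connected_matrix_group_def by blast
  obtain K where K: "K > 0" "\<And>(a::'n sqm) (b::'n sqm). norm (a ** b) \<le> norm a * norm b * K"
    using bounded_bilinear.pos_bounded[OF bbl_mm] by blast
  obtain b where b: "b > 0" "\<And>x. x \<in> G \<Longrightarrow> norm x \<le> b"
    using compact_imp_bounded[OF cpt] unfolding bounded_pos by blast
  define L where "L = K * K * b * b"
  have Lpos: "L > 0" unfolding L_def using K b by simp
  have lip: "norm (matrix_inv h - matrix_inv g) \<le> L * norm (h - g)" if g: "g \<in> G" and h: "h \<in> G" for g h
  proof -
    have "matrix_inv h ** (g - h) ** matrix_inv g
        = matrix_inv h ** g ** matrix_inv g - matrix_inv h ** h ** matrix_inv g"
      by (simp only: mm_diff_l mm_diff_r)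
    also have "\<dots> = matrix_inv h - matrix_inv g"
      using minv[OF inv[OF g]] minv[OF inv[OF h]] by (simp add: matrix_mul_assoc[symmetric])
    finally have eq: "matrix_inv h - matrix_inv g = matrix_inv h ** (g - h) ** matrix_inv g" by simp
    have ib: "norm (matrix_inv h) \<le> b" "norm (matrix_inv g) \<le> b" using b(2) ginv g h by auto
    have a0: "norm (matrix_inv h) * norm (g - h) * K \<le> b * norm (g - h) * K"
      using ib(1) K(1) by (intro mult_right_mono) auto
    have a1: "norm (matrix_inv h ** (g - h)) \<le> b * norm (g - h) * K"
      using K(2)[of "matrix_inv h" "g - h"] a0 by linarith
    have a2: "norm (matrix_inv h ** (g - h)) * norm (matrix_inv g) \<le> (b * norm (g - h) * K) * b"
      by (rule mult_mono[OF a1 ib(2)]) (use K b in \<open>auto intro!: mult_nonneg_nonneg\<close>)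
    have a3: "norm (matrix_inv h ** (g - h)) * norm (matrix_inv g) * K \<le> (b * norm (g - h) * K) * b * K"
      by (rule mult_right_mono[OF a2]) (use K in auto)
    have "norm (matrix_inv h ** (g - h) ** matrix_inv g) \<le> (b * norm (g - h) * K) * b * K"
      using K(2)[of "matrix_inv h ** (g - h)" "matrix_inv g"] a3 by linarith
    also have "\<dots> = L * norm (h - g)" unfolding L_def by (simp add: norm_minus_commute mult_ac)
    finally show ?thesis using eq by simp
  qed
  show ?thesis unfolding continuous_on_iff
  proof (intro ballI allI impI)
    fix x e assume x: "x \<in> G" and e: "(0::real) < e"
    show "\<exists>d>0. \<forall>x'\<in>G. dist x' x < d \<longrightarrow> dist (matrix_inv x') (matrix_inv x) < e"
    proof (intro exI[of _ "e / L"] conjI ballI impI)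
      show "e / L > 0" using e Lpos by simp
      fix x' assume x': "x' \<in> G" and d: "dist x' x < e / L"
      have "dist (matrix_inv x') (matrix_inv x) \<le> L * dist x' x"
        using lip[OF x x'] by (simp add: dist_norm)
      also have "\<dots> < L * (e / L)" using d Lpos by (intro mult_strict_left_mono) auto
      also have "\<dots> = e" using Lpos by simp
      finally show "dist (matrix_inv x') (matrix_inv x) < e" .
    qed
  qed
qed

lemma smooth_D:
  assumes "smooth_curve \<gamma>"
  obtains D where "D 0 = \<gamma>" "\<And>n t. t \<in> {0..1} \<Longrightarrow> (D n has_vector_derivative D (Suc n) t) (at t within {0..1})"
  using assms unfolding smooth_curve_def by blast

lemma curve_facts:
  assumes grp: "compact_connected_matrix_group (G :: ('n::finite) sqm set)"
    and cur: "curve_in G \<gamma> p q"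
  shows "continuous_on {0..1} (left_vel \<gamma>)" and "\<And>t. t \<in> {0<..<1} \<Longrightarrow> left_vel \<gamma> t \<in> lie_algebra G"
proof -
  have inv: "\<And>g. g \<in> G \<Longrightarrow> invertible g" and ginv: "\<And>g. g \<in> G \<Longrightarrow> matrix_inv g \<in> G"
    and mul: "\<And>g h. g \<in> G \<Longrightarrow> h \<in> G \<Longrightarrow> g ** h \<in> G" and one: "idm \<in> G"
    using grp unfolding compact_connected_matrix_group_def by auto
  have sm: "smooth_curve \<gamma>" and inG: "\<And>t. t \<in> {0..1} \<Longrightarrow> \<gamma> t \<in> G"
    using cur unfolding curve_in_def by auto
  obtain D where D0: "D 0 = \<gamma>" and Dd: "\<And>n t. t \<in> {0..1} \<Longrightarrow> (D n has_vector_derivative D (Suc n) t) (at t within {0..1})"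
    using smooth_D[OF sm] by blast
  have vd: "vector_derivative \<gamma> (at t within {0..1}) = D 1 t" if t: "t \<in> {0..1}" for t
    using vector_derivative_within_cbox[of 0 1 t \<gamma> "D 1 t"] Dd[OF t, of 0] D0 t by simp
  have lv: "left_vel \<gamma> t = matrix_inv (\<gamma> t) ** D 1 t" if t: "t \<in> {0..1}" for t
    unfolding left_vel_def vd[OF t] ..
  have contD: "continuous_on {0..1} (D n)" for n
    unfolding continuous_on_eq_continuous_within
  proof
    fix t :: real assume t: "t \<in> {0..1}"
    show "continuous (at t within {0..1}) (D n)" by (rule has_vector_derivative_continuous[OF Dd[OF t]])
  qed
  have contg: "continuous_on {0..1} \<gamma>" using contD[of 0] unfolding D0 .
  have img: "\<gamma> ` {0..1} \<subseteq> G" using inG by blast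
  have continv: "continuous_on {0..1} (\<lambda>t. matrix_inv (\<gamma> t))"
    by (rule continuous_on_compose2[OF matrix_inv_cont[OF grp] contg img])
  have cprod: "continuous_on {0..1} (\<lambda>t. matrix_inv (\<gamma> t) ** D 1 t)"
    by (rule bounded_bilinear.continuous_on[OF bbl_mm continv contD[of 1]])
  show "continuous_on {0..1} (left_vel \<gamma>)"
    by (rule continuous_on_eq[OF cprod]) (simp add: lv)
  fix t0 :: real assume t0: "t0 \<in> {0<..<1}"
  define g where "g = \<gamma> t0"
  have gG: "g \<in> G" using inG t0 unfolding g_def by auto
  define r where "r = min t0 (1 - t0)"
  have r: "r > 0" using t0 unfolding r_def by auto
  define \<beta> where "\<beta> = (\<lambda>s. if s \<in> ball 0 r then matrix_inv g ** \<gamma> (t0 + s) else idm)"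
  have inball: "t0 + s \<in> {0..1}" if "s \<in> ball 0 r" for s
    using that unfolding r_def by (auto simp: dist_real_def)
  have \<beta>G: "\<forall>s. \<beta> s \<in> G"
  proof
    fix s
    show "\<beta> s \<in> G"
    proof (cases "s \<in> ball 0 r")
      case True
      then have "\<gamma> (t0 + s) \<in> G" using inball inG by blast
      then show ?thesis unfolding \<beta>_def using True mul ginv[OF gG] by simp
    next
      case False
      then show ?thesis unfolding \<beta>_def using one by simp
    qed
  qed
  have \<beta>0: "\<beta> 0 = idm" unfolding \<beta>_def g_def using r minv[OF inv[OF gG]] g_def by simp
  have dg: "(\<gamma> has_vector_derivative D 1 t0) (at t0)"
  proof -
    have "(\<gamma> has_vector_derivative D 1 t0) (at t0 within {0<..<1})"
    proof -
      have sub: "{0<..<1::real} \<subseteq> {0..1}" by auto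
      have "t0 \<in> {0..1}" using t0 by auto
      from has_vector_derivative_within_subset[OF Dd[OF this, of 0] sub] show ?thesis using D0 by simp
    qed
    then show ?thesis using has_vector_derivative_within_open[of t0 "{0<..<1}"] t0 by auto
  qed
  have dshift: "((\<lambda>s. \<gamma> (t0 + s)) has_vector_derivative D 1 t0) (at 0)"
  proof -
    have "((\<lambda>s. t0 + s) has_vector_derivative 1) (at 0)"
      by (auto intro!: derivative_eq_intros simp: has_real_derivative_iff_has_vector_derivative[symmetric])
    from vector_diff_chain_at[OF this, of \<gamma>] dg show ?thesis by (simp add: o_def)
  qed
  have bl: "bounded_linear (\<lambda>Y::'n sqm. matrix_inv g ** Y)"
    using bounded_bilinear.bounded_linear_right[OF bbl_mm, of "matrix_inv g"] by simp
  have "((\<lambda>s. matrix_inv g ** \<gamma> (t0 + s)) has_vector_derivative matrix_inv g ** D 1 t0) (at 0)"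
    using bounded_linear.has_vector_derivative[OF bl dshift] .
  then have "(\<beta> has_vector_derivative matrix_inv g ** D 1 t0) (at 0)"
    by (rule has_vector_derivative_transform_within_open[of _ _ _ "ball 0 r"]) (use r in \<open>auto simp: \<beta>_def\<close>)
  then have "matrix_inv g ** D 1 t0 \<in> lie_algebra G"
    unfolding lie_algebra_def using \<beta>G \<beta>0 by blast
  then show "left_vel \<gamma> t0 \<in> lie_algebra G" using lv[of t0] t0 unfolding g_def by auto
qed



lemma int_mono01:
  fixes f h F H :: "real \<Rightarrow> real"
  assumes cF: "continuous_on {0..1} F" and cH: "continuous_on {0..1} H"
    and fF: "\<And>t. t \<in> {0..1} \<Longrightarrow> f t = F t" and hH: "\<And>t. t \<in> {0..1} \<Longrightarrow> h t = H t"
    and le: "\<And>t. t \<in> {0..1} \<Longrightarrow> F t \<le> H t"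
  shows "integral {0..1} f \<le> integral {0..1} h"
proof -
  have "integral {0..1} f = integral {0..1} F" by (rule integral_cong) (simp add: fF)
  also have "\<dots> \<le> integral {0..1} H"
    by (rule integral_le[OF integrable_continuous_interval[OF cF] integrable_continuous_interval[OF cH] le])
  also have "\<dots> = integral {0..1} h" by (rule integral_cong) (simp add: hH)
  finally show ?thesis .
qed

lemma integral_cmult_real: "integral S (\<lambda>t. (c::real) * g t) = c * integral S g"
  using integral_cmul[of S c g] by simp

context LAP
begin

lemma w_cont: "continuous_on S (\<lambda>Z. w Z j)"
proof -
  have "linear (\<lambda>Z. gI Z (Y j))" using bil unfolding bilinear_def by blast
  hence "bounded_linear (\<lambda>Z. gI Z (Y j))" using linear_conv_bounded_linear by blast
  then show ?thesis unfolding w_def by (rule linear_continuous_on)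
qed

lemma lengths:
  assumes A: "A \<in> carrier_mat m m" and inv: "invertible_mat A" and S: "sorts m P A"
    and k: "1 \<le> k" "k \<le> m"
    and lvc: "continuous_on {0..1} (left_vel \<gamma>)" and lvV: "\<And>t. t \<in> {0..1} \<Longrightarrow> left_vel \<gamma> t \<in> VV"
  shows "curve_length (restr_star gI (span (Y ` {k-1..<m}))) \<gamma> \<le> sigma A k * curve_length (metric_A m X A) \<gamma>"
    and "(\<And>t. t \<in> {0..1} \<Longrightarrow> left_vel \<gamma> t \<in> span (Y ` {..<k})) \<Longrightarrow>
          sigma A k * curve_length (metric_A m X A) \<gamma> \<le> curve_length gI \<gamma>"
proof -
  let ?lv = "left_vel \<gamma>"
  have wl: "continuous_on {0..1} (\<lambda>t. w (?lv t) j)" for j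
    using continuous_on_compose2[OF w_cont[of UNIV j] lvc] by simp
  have spos: "\<And>j. j < m \<Longrightarrow> sigma A (j+1) > 0" using sv_facts(2)[OF A inv S] .
  define FA where "FA = (\<lambda>t. sqrt (\<Sum>j<m. (w (?lv t) j)\<^sup>2 / (sigma A (j+1))\<^sup>2))"
  define FC where "FC = (\<lambda>t. sqrt (\<Sum>j\<in>{k-1..<m}. (w (?lv t) j)\<^sup>2))"
  define FI where "FI = (\<lambda>t. sqrt (\<Sum>j<m. (w (?lv t) j)\<^sup>2))"
  have cFA: "continuous_on {0..1} FA" unfolding FA_def
    using spos by (auto intro!: continuous_intros wl) (metis Suc_eq_plus1 less_irrefl)
  have cFC: "continuous_on {0..1} FC" unfolding FC_def by (auto intro!: continuous_intros wl)
  have cFI: "continuous_on {0..1} FI" unfolding FI_def by (auto intro!: continuous_intros wl)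
  have eA: "sqrt (metric_A m X A (?lv t) (?lv t)) = FA t" if "t \<in> {0..1}" for t
    unfolding FA_def using metricA_eq[OF A inv S lvV[OF that]] by simp
  have eC: "sqrt (restr_star gI (span (Y ` {k-1..<m})) (?lv t) (?lv t)) = FC t" if "t \<in> {0..1}" for t
  proof -
    have sub: "{k-1..<m} \<subseteq> {..<m}" by auto
    show ?thesis unfolding FC_def using restr_eq[OF sub lvV[OF that]] by simp
  qed
  have eI: "sqrt (gI (?lv t) (?lv t)) = FI t" if "t \<in> {0..1}" for t
    unfolding FI_def using gZZ[OF lvV[OF that]] by simp
  have "curve_length (restr_star gI (span (Y ` {k-1..<m}))) \<gamma> \<le> integral {0..1} (\<lambda>t. sigma A k * sqrt (metric_A m X A (?lv t) (?lv t)))"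
    unfolding curve_length_def
  proof (rule int_mono01[where F=FC and H="\<lambda>t. sigma A k * FA t"])
    show "continuous_on {0..1} FC" by (rule cFC)
    show "\<And>t. t \<in> {0..1} \<Longrightarrow> sqrt (restr_star gI (span (Y ` {k-1..<m})) (?lv t) (?lv t)) = FC t" by (rule eC)
    show "continuous_on {0..1} (\<lambda>t. sigma A k * FA t)" by (intro continuous_intros cFA)
    show "\<And>t. t \<in> {0..1} \<Longrightarrow> sigma A k * sqrt (metric_A m X A (?lv t) (?lv t)) = sigma A k * FA t"
      using eA by simp
    show "\<And>t. t \<in> {0..1} \<Longrightarrow> FC t \<le> sigma A k * FA t"
      using pointwise1'[OF A inv S lvV k] eA eC by metis
  qed
  also have "\<dots> = sigma A k * curve_length (metric_A m X A) \<gamma>"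
    unfolding curve_length_def by (rule integral_cmult_real)
  finally show "curve_length (restr_star gI (span (Y ` {k-1..<m}))) \<gamma> \<le> sigma A k * curve_length (metric_A m X A) \<gamma>" .
  assume hor: "\<And>t. t \<in> {0..1} \<Longrightarrow> ?lv t \<in> span (Y ` {..<k})"
  have "sigma A k * curve_length (metric_A m X A) \<gamma> = integral {0..1} (\<lambda>t. sigma A k * sqrt (metric_A m X A (?lv t) (?lv t)))"
    unfolding curve_length_def by (rule integral_cmult_real[symmetric])
  also have "\<dots> \<le> curve_length gI \<gamma>"
    unfolding curve_length_def
  proof (rule int_mono01[where H=FI and F="\<lambda>t. sigma A k * FA t"])
    show "continuous_on {0..1} FI" by (rule cFI)
    show "\<And>t. t \<in> {0..1} \<Longrightarrow> sqrt (gI (?lv t) (?lv t)) = FI t" by (rule eI)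
    show "continuous_on {0..1} (\<lambda>t. sigma A k * FA t)" by (intro continuous_intros cFA)
    show "\<And>t. t \<in> {0..1} \<Longrightarrow> sigma A k * sqrt (metric_A m X A (?lv t) (?lv t)) = sigma A k * FA t"
      using eA by simp
    show "\<And>t. t \<in> {0..1} \<Longrightarrow> sigma A k * FA t \<le> FI t"
      using pointwise2'[OF A inv S hor k] eA eI by metis
  qed
  finally show "sigma A k * curve_length (metric_A m X A) \<gamma> \<le> curve_length gI \<gamma>" .
qed

end



theorem proposition3p3:
  fixes G :: "('n::finite) sqm set"
    and gI :: "'n sqm \<Rightarrow> 'n sqm \<Rightarrow> real"
    and X :: "nat \<Rightarrow> 'n sqm"
    and m k :: nat
    and A P :: "real mat"
  assumes grp: "compact_connected_matrix_group G"
    and m2: "m \<ge> 2"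
    and gI_bil: "bilinear gI"
    and gI_sym: "\<forall>Z\<in>lie_algebra G. \<forall>W\<in>lie_algebra G. gI Z W = gI W Z"
    and gI_pos: "\<forall>Z\<in>lie_algebra G. Z \<noteq> 0 \<longrightarrow> gI Z Z > 0"
    and gI_Ad: "\<forall>g\<in>G. \<forall>Z\<in>lie_algebra G. \<forall>W\<in>lie_algebra G.
                  gI (g ** Z ** matrix_inv g) (g ** W ** matrix_inv g) = gI Z W"
    and X_in: "\<forall>i<m. X i \<in> lie_algebra G"
    and X_span: "lie_algebra G = span (X ` {..<m})"
    and X_on: "\<forall>i<m. \<forall>j<m. gI (X i) (X j) = (if i = j then 1 else 0)"
    and A_GL: "A \<in> carrier_mat m m" "invertible_mat A"
    and P_sorts: "sorts m P A"
    and k: "1 \<le> k" "k \<le> m"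
  shows "diam_form G (restr_star gI (span (basis_tw m X P ` {k-1..<m}))) / ereal (sigma A k)
           \<le> diam_form G (metric_A m X A)
       \<and> diam_form G (metric_A m X A)
           \<le> diam_sr G (span (basis_tw m X P ` {..<k})) gI / ereal (sigma A k)"
proof -
  interpret L: LAP gI X m P
  proof (unfold_locales)
    show "bilinear gI" by (rule gI_bil)
    show "\<forall>i<m. \<forall>j<m. gI (X i) (X j) = (if i = j then 1 else 0)" by (rule X_on)
    show "\<forall>Z\<in>span (X ` {..<m}). Z \<noteq> 0 \<longrightarrow> 0 < gI Z Z" using gI_pos X_span by simp
    show "P \<in> carrier_mat m m" using P_sorts by (simp add: sorts_def)
    show "P * transpose_mat P = 1\<^sub>m m" using P_sorts by (simp add: sorts_def)
  qed
  define s where "s = sigma A k"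
  have spos: "s > 0" unfolding s_def using sv_facts(2)[OF A_GL P_sorts, of "k-1"] k by simp
  have sgt: "ereal s > 0" "ereal s \<noteq> \<infinity>" using spos by auto
  define bC where "bC = restr_star gI (span (basis_tw m X P ` {k-1..<m}))"
  define bA where "bA = metric_A m X A"
  define H where "H = span (basis_tw m X P ` {..<k})"
  have curve: "continuous_on {0..1} (left_vel \<gamma>) \<and> (\<forall>t\<in>{0..1}. left_vel \<gamma> t \<in> span (X ` {..<m}))"
    if c: "curve_in G \<gamma> p q" for \<gamma> p q
  proof -
    have cont: "continuous_on {0..1} (left_vel \<gamma>)" using curve_facts(1)[OF grp c] .
    have cl: "closure {0<..<1::real} = {0..1}" by simp
    have "left_vel \<gamma> ` closure {0<..<1::real} \<subseteq> lie_algebra G"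
    proof (rule image_closure_subset)
      show "continuous_on (closure {0<..<1::real}) (left_vel \<gamma>)" using cont cl by simp
      show "closed (lie_algebra G)" using X_span by simp
      show "left_vel \<gamma> ` {0<..<1} \<subseteq> lie_algebra G" using curve_facts(2)[OF grp c] by blast
    qed
    then show ?thesis using cont cl X_span by auto
  qed
  have len1: "curve_length bC \<gamma> \<le> s * curve_length bA \<gamma>" if c: "curve_in G \<gamma> p q" for \<gamma> p q
    unfolding bC_def bA_def s_def
    using L.lengths(1)[OF A_GL P_sorts k] curve[OF c] by blast
  have len2: "s * curve_length bA \<gamma> \<le> curve_length gI \<gamma>"
    if c: "curve_in G \<gamma> p q" and hor: "\<forall>t\<in>{0..1}. left_vel \<gamma> t \<in> H" for \<gamma> p q
    unfolding bA_def s_def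
    using L.lengths(2)[OF A_GL P_sorts k] curve[OF c] hor unfolding H_def by blast
  have p1: "diam_form G bC / ereal s \<le> diam_form G bA"
  proof -
    have "diam_form G bC \<le> ereal s * diam_form G bA"
      unfolding diam_form_def[of G bC]
    proof (intro SUP_least)
      fix p q assume p: "p \<in> G" and q: "q \<in> G"
      let ?IA = "INF \<gamma>\<in>{\<gamma>. curve_in G \<gamma> p q}. ereal (curve_length bA \<gamma>)"
      let ?IC = "INF \<gamma>\<in>{\<gamma>. curve_in G \<gamma> p q}. ereal (curve_length bC \<gamma>)"
      have "?IC / ereal s \<le> ?IA"
      proof (rule INF_greatest)
        fix \<gamma> assume "\<gamma> \<in> {\<gamma>. curve_in G \<gamma> p q}"
        then have c: "curve_in G \<gamma> p q" by simp
        have "?IC \<le> ereal (curve_length bC \<gamma>)" by (rule INF_lower) (simp add: c)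
        also have "\<dots> \<le> ereal s * ereal (curve_length bA \<gamma>)" using len1[OF c] by simp
        finally show "?IC / ereal s \<le> ereal (curve_length bA \<gamma>)"
          using ereal_divide_le_pos[OF sgt] by simp
      qed
      hence "?IC \<le> ereal s * ?IA" using ereal_divide_le_pos[OF sgt] by simp
      also have "\<dots> \<le> ereal s * diam_form G bA"
      proof (rule ereal_mult_left_mono)
        show "?IA \<le> diam_form G bA" unfolding diam_form_def
          by (rule SUP_upper2[OF p], rule SUP_upper[OF q])
      qed (use spos in simp)
      finally show "?IC \<le> ereal s * diam_form G bA" .
    qed
    then show ?thesis using ereal_divide_le_pos[OF sgt] by simp
  qed
  have p2: "diam_form G bA \<le> diam_sr G H gI / ereal s"
    unfolding diam_form_def[of G bA]
  proof (intro SUP_least)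
    fix p q assume p: "p \<in> G" and q: "q \<in> G"
    let ?IA = "INF \<gamma>\<in>{\<gamma>. curve_in G \<gamma> p q}. ereal (curve_length bA \<gamma>)"
    let ?IH = "INF \<gamma>\<in>{\<gamma>. curve_in G \<gamma> p q \<and> (\<forall>t\<in>{0..1}. left_vel \<gamma> t \<in> H)}. ereal (curve_length gI \<gamma>)"
    have "ereal s * ?IA \<le> ?IH"
    proof (rule INF_greatest)
      fix \<gamma> assume "\<gamma> \<in> {\<gamma>. curve_in G \<gamma> p q \<and> (\<forall>t\<in>{0..1}. left_vel \<gamma> t \<in> H)}"
      then have c: "curve_in G \<gamma> p q" and hor: "\<forall>t\<in>{0..1}. left_vel \<gamma> t \<in> H" by auto
      have "ereal s * ?IA \<le> ereal s * ereal (curve_length bA \<gamma>)"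
        by (rule ereal_mult_left_mono) (auto intro: INF_lower simp: c spos less_imp_le)
      also have "\<dots> \<le> ereal (curve_length gI \<gamma>)" using len2[OF c hor] by simp
      finally show "ereal s * ?IA \<le> ereal (curve_length gI \<gamma>)" .
    qed
    hence "?IA \<le> ?IH / ereal s" using ereal_le_divide_pos[OF sgt] by simp
    also have "?IH / ereal s \<le> diam_sr G H gI / ereal s"
    proof (rule ereal_divide_right_mono)
      show "?IH \<le> diam_sr G H gI" unfolding diam_sr_def
        by (rule SUP_upper2[OF p], rule SUP_upper[OF q])
    qed (use sgt in simp)
    finally show "?IA \<le> diam_sr G H gI / ereal s" .
  qed
  show ?thesis using p1 p2 unfolding bC_def bA_def H_def s_def by simp
qed


end
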